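(* Let $\mathcal{P}$ be a discrete minimization problem with $n$ variables and let $\mathcal{M}$ be a relaxed multivalued decision diagram for $\mathcal{P}$, i.e. $Sol(\mathcal{P}) \subseteq Sol(\mathcal{M})$. Let $u$ be an exact node of $\mathcal{M}$, and let $(\underline{u}, \mathcal{M}^* )$ be the output of the peel operation applied to $(\mathcal{M},u)$, where the filter step removes an arc only if no feasible solution of $\mathcal{P}$ corresponds to a path using that arc. Then $$Sol(\mathcal{P}) \subseteq Sol(\mathcal{M}^* ) \cup Sol(\underline{u}).$$
   Context: A multivalued decision diagram (MDD) $\mathcal{M}$ for a problem with variables $x_1,\dots,x_n$ is a directed acyclic graph whose nodes are partitioned into layers $L_1,\dots,L_{n+1}$; $L_1=\{r\}$ (root, no in-arcs), $L_{n+1}=\{t\}$ (terminal, no out-arcs). Every arc goes from a node on layer $i$ to a node on layer $i+1$ and carries a label $l\in D(x_i)$ (meaning $x_i=l$) and a value. $Sol(\mathcal{M})$ is the set of label sequences of $r$–$t$ paths; $Sol(\mathcal{P})$ is the set of feasible assignments. For a node $v$, $All_v^\downarrow$ (resp. $Some_v^\downarrow$) is the set of labels appearing on every (resp. at least one) $r$–$v$ path. A node $v$ is exact if $Some_v^\downarrow=All_v^\downarrow$ and every arc ending at $v$ starts at an exact node. Peel operation on $(\mathcal{M},u)$, $u$ exact: create a new diagram $\underline{u}$; delete all in-arcs of $u$, remove $u$ from $\mathcal{M}$ and make it the root of $\underline{u}$ (its out-arcs still end in $\mathcal{M}$). While some arc starts in $\underline{u}$ and ends in $\mathcal{M}$: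 for each node $m$ of $\mathcal{M}$ having an in-arc originating in $\underline{u}$, create a new node $m'$ on the same layer in $\underline{u}$, redirect every in-arc of $m$ originating in $\underline{u}$ to $m'$, give $m'$ a copy (same label, value, head) of every out-arc of $m$, and apply the filter to the in-arcs of $m'$ and the out-arcs of $m$ and $m'$. Finally, repeatedly delete from $\mathcal{M}$ every node other than $r,t$ with no in-arcs or no out-arcs (with its arcs); the result is $\mathcal{M}^*$. The copy of $t$ in $\underline{u}$ is its terminal $t'$. $Sol(\underline{u})$ denotes the set of label sequences obtained by concatenating the label sequence of some $r$–$u$ path of the original diagram $\mathcal{M}$ with the label sequence of some $u$–$t'$ path of $\underline{u}$. *)

theory Defs
  imports Complex_Main
begin

type_synonym ('v, 'l) arc = "'v \<times> 'l \<times> real \<times> 'v"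

definition src :: "('v, 'l) arc \<Rightarrow> 'v" where "src e = fst e"
definition lbl :: "('v, 'l) arc \<Rightarrow> 'l" where "lbl e = fst (snd e)"
definition val :: "('v, 'l) arc \<Rightarrow> real" where "val e = fst (snd (snd e))"
definition tgt :: "('v, 'l) arc \<Rightarrow> 'v" where "tgt e = snd (snd (snd e))"

inductive apath :: "('v, 'l) arc set \<Rightarrow> 'v \<Rightarrow> ('v, 'l) arc list \<Rightarrow> 'v \<Rightarrow> bool"
  for A where
  apath_Nil: "apath A v [] v"
| apath_Cons: "e \<in> A \<Longrightarrow> src e = v \<Longrightarrow> apath A (tgt e) es w \<Longrightarrow> apath A v (e # es) w"

definition labels :: "('v, 'l) arc list \<Rightarrow> 'l list" where
  "labels es = map lbl es"

definition mdd :: "nat \<Rightarrow> (nat \<Rightarrow> 'l set) \<Rightarrow> 'v set \<Rightarrow> ('v, 'l) arc set \<Rightarrow> ('v \<Rightarrow> nat)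
                    \<Rightarrow> 'v \<Rightarrow> 'v \<Rightarrow> bool" where
  "mdd n D N A lay r t \<longleftrightarrow>
     finite N \<and> finite A \<and> r \<in> N \<and> t \<in> N \<and>
     (\<forall>v\<in>N. 1 \<le> lay v \<and> lay v \<le> n + 1) \<and>
     (\<forall>v\<in>N. lay v = 1 \<longleftrightarrow> v = r) \<and>
     (\<forall>v\<in>N. lay v = n + 1 \<longleftrightarrow> v = t) \<and>
     (\<forall>e\<in>A. src e \<in> N \<and> tgt e \<in> N \<and> lay (tgt e) = lay (src e) + 1 \<and>
             lbl e \<in> D (lay (src e)))"

definition SolMDD :: "('v, 'l) arc set \<Rightarrow> 'v \<Rightarrow> 'v \<Rightarrow> 'l list set" where
  "SolMDD A r t = {labels es | es. apath A r es t}"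

text \<open>A discrete problem with n variables, domains D i (variable x_i, i = 1..n),
  and feasible set solP (assignments as lists, x_i = xs ! (i-1)).\<close>
definition discrete_problem :: "nat \<Rightarrow> (nat \<Rightarrow> 'l set) \<Rightarrow> 'l list set \<Rightarrow> bool" where
  "discrete_problem n D solP \<longleftrightarrow>
     (\<forall>i\<in>{1..n}. finite (D i)) \<and>
     (\<forall>xs\<in>solP. length xs = n \<and> (\<forall>i<n. xs ! i \<in> D (i + 1)))"

definition Some_down :: "('v, 'l) arc set \<Rightarrow> 'v \<Rightarrow> 'v \<Rightarrow> 'l set" where
  "Some_down A r v = \<Union> {set (labels es) | es. apath A r es v}"

definition All_down :: "('v, 'l) arc set \<Rightarrow> 'v \<Rightarrow> 'v \<Rightarrow> 'l set" where
  "All_down A r v = \<Inter> {set (labels es) | es. apath A r es v}"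

inductive exact_node :: "('v, 'l) arc set \<Rightarrow> 'v \<Rightarrow> 'v \<Rightarrow> bool" for A r where
  "Some_down A r v = All_down A r v \<Longrightarrow>
   (\<forall>e\<in>A. tgt e = v \<longrightarrow> exact_node A r (src e)) \<Longrightarrow> exact_node A r v"

text \<open>During the peel operation the nodes of M are represented as Inl m and
  the nodes of the new diagram (u and the copies m') as Inr m.
  All arcs of both diagrams are kept in one arc set B.\<close>

definition crossing :: "('n + 'n, 'l) arc \<Rightarrow> bool" where
  "crossing e \<longleftrightarrow> (\<exists>a b. src e = Inr a \<and> tgt e = Inl b)"

text \<open>A feasible solution x corresponds to a path using arc e in the current state B:
  either an r-t path of M, or an r-u path of the original diagram followed by a path
  of the new diagram starting at u and ending at t (in M) or at t' (its copy).\<close>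
definition feasible_through ::
  "'l list set \<Rightarrow> ('n, 'l) arc set \<Rightarrow> 'n \<Rightarrow> 'n \<Rightarrow> 'n
     \<Rightarrow> ('n + 'n, 'l) arc set \<Rightarrow> ('n + 'n, 'l) arc \<Rightarrow> bool" where
  "feasible_through solP A r t u B e \<longleftrightarrow>
     (\<exists>x\<in>solP.
        (\<exists>es. apath B (Inl r) es (Inl t) \<and> e \<in> set es \<and> labels es = x) \<or>
        (\<exists>p es z. apath A r p u \<and> apath B (Inr u) es z \<and> (z = Inl t \<or> z = Inr t) \<and>
                  e \<in> set es \<and> labels p @ labels es = x))"

inductive filter_step ::
  "'l list set \<Rightarrow> ('n, 'l) arc set \<Rightarrow> 'n \<Rightarrow> 'n \<Rightarrow> 'n \<Rightarrow> ('n + 'n, 'l) arc set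
     \<Rightarrow> ('n + 'n, 'l) arc set \<Rightarrow> ('n + 'n, 'l) arc set \<Rightarrow> bool"
  for solP A r t u C where
  "e \<in> B \<Longrightarrow> e \<in> C \<Longrightarrow> \<not> feasible_through solP A r t u B e \<Longrightarrow>
   filter_step solP A r t u C B (B - {e})"

text \<open>Initial state: in-arcs of u deleted, u moved to the new diagram as its root.\<close>
definition peel_init :: "('n, 'l) arc set \<Rightarrow> 'n \<Rightarrow> ('n + 'n, 'l) arc set" where
  "peel_init A u =
     {(Inl a, l, c, Inl b) | a l c b. (a, l, c, b) \<in> A \<and> a \<noteq> u \<and> b \<noteq> u} \<union>
     {(Inr u, l, c, Inl b) | l c b. (u, l, c, b) \<in> A \<and> b \<noteq> u}"

inductive peel_iter ::
  "'l list set \<Rightarrow> ('n, 'l) arc set \<Rightarrow> 'n \<Rightarrow> 'n \<Rightarrow> 'n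
     \<Rightarrow> 'n set \<times> ('n + 'n, 'l) arc set \<Rightarrow> 'n set \<times> ('n + 'n, 'l) arc set \<Rightarrow> bool"
  for solP A r t u where
  "X = {m. \<exists>e\<in>B. crossing e \<and> tgt e = Inl m} \<Longrightarrow> X \<noteq> {} \<Longrightarrow>
   B1 = {e \<in> B. \<not> crossing e}
        \<union> {(src e, lbl e, val e, Inr m) | e m. e \<in> B \<and> crossing e \<and> tgt e = Inl m}
        \<union> {(Inr m, lbl e, val e, tgt e) | e m. e \<in> B \<and> m \<in> X \<and> src e = Inl m} \<Longrightarrow>
   C = {e. \<exists>m\<in>X. tgt e = Inr m \<or> src e = Inl m \<or> src e = Inr m} \<Longrightarrow>
   (filter_step solP A r t u C)\<^sup>*\<^sup>* B1 B2 \<Longrightarrow>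
   peel_iter solP A r t u (U, B) (U \<union> X, B2)"

inductive prune_step ::
  "'n \<Rightarrow> 'n \<Rightarrow> 'n set \<times> ('n + 'n, 'l) arc set \<Rightarrow> 'n set \<times> ('n + 'n, 'l) arc set \<Rightarrow> bool"
  for r t where
  "v \<in> MN \<Longrightarrow> v \<noteq> r \<Longrightarrow> v \<noteq> t \<Longrightarrow>
   (\<not> (\<exists>e\<in>B. tgt e = Inl v) \<or> \<not> (\<exists>e\<in>B. src e = Inl v)) \<Longrightarrow>
   prune_step r t (MN, B) (MN - {v}, {e \<in> B. src e \<noteq> Inl v \<and> tgt e \<noteq> Inl v})"

text \<open>peel solP A N r t u U MN B: (U, MN, B) is a possible outcome of peeling (M, u):
  U are the nodes of the new diagram (as copies Inr m), MN the nodes of M*,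
  and B the arcs (Inl-Inl arcs form M*, Inr-Inr arcs form the new diagram).\<close>
definition peel ::
  "'l list set \<Rightarrow> ('n, 'l) arc set \<Rightarrow> 'n set \<Rightarrow> 'n \<Rightarrow> 'n \<Rightarrow> 'n
     \<Rightarrow> 'n set \<Rightarrow> 'n set \<Rightarrow> ('n + 'n, 'l) arc set \<Rightarrow> bool" where
  "peel solP A N r t u U MN B \<longleftrightarrow>
     (\<exists>B1. (peel_iter solP A r t u)\<^sup>*\<^sup>* ({u}, peel_init A u) (U, B1) \<and>
           (\<forall>e\<in>B1. \<not> crossing e) \<and>
           (prune_step r t)\<^sup>*\<^sup>* (N - {u}, B1) (MN, B) \<and>
           \<not> (\<exists>s. prune_step r t (MN, B) s))"

text \<open>Sol(M*): r-t paths of M* (empty if r was removed, i.e. u = r).\<close>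
definition SolMstar :: "'n \<Rightarrow> 'n \<Rightarrow> 'n set \<Rightarrow> ('n + 'n, 'l) arc set \<Rightarrow> 'l list set" where
  "SolMstar r t MN B = {labels es | es. r \<in> MN \<and> apath B (Inl r) es (Inl t)}"

definition SolU :: "('n, 'l) arc set \<Rightarrow> 'n \<Rightarrow> 'n \<Rightarrow> 'n \<Rightarrow> ('n + 'n, 'l) arc set \<Rightarrow> 'l list set" where
  "SolU A r t u B = {labels p @ labels es | p es. apath A r p u \<and> apath B (Inr u) es (Inr t)}"

end

theory Submission
  imports Defs
begin

lemma apath_set: "apath B v es w \<Longrightarrow> set es \<subseteq> B"
  by (induction rule: apath.induct) auto

lemma apath_mono: "apath B v es w \<Longrightarrow> set es \<subseteq> B' \<Longrightarrow> apath B' v es w"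
  by (induction rule: apath.induct) (auto intro: apath.intros)

lemma apath_Cons_iff: "apath A v (e # es) w \<longleftrightarrow> e \<in> A \<and> src e = v \<and> apath A (tgt e) es w"
  by (auto intro: apath.intros elim: apath.cases)

lemma apath_Nil_iff: "apath A v [] w \<longleftrightarrow> v = w"
  by (auto intro: apath.intros elim: apath.cases)

lemma labels_simps[simp]: "labels [] = []" "labels (e # es) = lbl e # labels es"
  "labels (xs @ ys) = labels xs @ labels ys"
  by (auto simp: labels_def)

lemma arc_simps[simp]: "src (a,l,c,b) = a" "lbl (a,l,c,b) = l" "val (a,l,c,b) = c" "tgt (a,l,c,b) = b"
  by (auto simp: src_def lbl_def val_def tgt_def)

lemma last_visit:
  "apath A v es w \<Longrightarrow> (v \<noteq> u \<and> (\<forall>e\<in>set es. tgt e \<noteq> u)) \<or>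
     (\<exists>p q. es = p @ q \<and> apath A v p u \<and> apath A u q w \<and> (\<forall>e\<in>set q. tgt e \<noteq> u))"
proof (induction rule: apath.induct)
  case (apath_Nil v)
  then show ?case by (cases "v = u") (auto intro: apath.intros)
next
  case (apath_Cons e v es w)
  show ?case
  proof (cases "\<exists>p q. es = p @ q \<and> apath A (tgt e) p u \<and> apath A u q w \<and> (\<forall>e\<in>set q. tgt e \<noteq> u)")
    case True
    then obtain p q where "es = p @ q" "apath A (tgt e) p u" "apath A u q w" "\<forall>e\<in>set q. tgt e \<noteq> u"
      by blast
    then show ?thesis using apath_Cons
      by (intro disjI2 exI[of _ "e # p"] exI[of _ q]) (auto intro: apath.intros)
  next
    case False
    then have h: "tgt e \<noteq> u" "\<forall>e\<in>set es. tgt e \<noteq> u" using apath_Cons by auto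
    show ?thesis
    proof (cases "v = u")
      case True
      then show ?thesis using apath_Cons h
        by (intro disjI2 exI[of _ "[]"] exI[of _ "e # es"]) (auto intro: apath.intros)
    qed (use h in auto)
  qed
qed

lemma src_not_u: "apath A v q w \<Longrightarrow> v \<noteq> u \<Longrightarrow> \<forall>e\<in>set q. tgt e \<noteq> u \<Longrightarrow> \<forall>e\<in>set q. src e \<noteq> u"
  by (induction rule: apath.induct) auto

definition inl_arc :: "('n, 'l) arc \<Rightarrow> ('n + 'n, 'l) arc" where
  "inl_arc e = (Inl (src e), lbl e, val e, Inl (tgt e))"

lemma inl_path:
  "apath A v q w \<Longrightarrow> \<forall>e\<in>set q. src e \<noteq> u \<and> tgt e \<noteq> u \<Longrightarrow>
   apath (peel_init A u) (Inl v) (map inl_arc q) (Inl w) \<and> labels (map inl_arc q) = labels q"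
proof (induction rule: apath.induct)
  case (apath_Nil v)
  then show ?case by (auto intro: apath.intros)
next
  case (apath_Cons e v es w)
  obtain a l c b where e: "e = (a,l,c,b)" by (cases e) auto
  have "inl_arc e \<in> peel_init A u"
    using apath_Cons e unfolding peel_init_def inl_arc_def by auto
  then show ?case using apath_Cons by (auto simp: apath_Cons_iff inl_arc_def)
qed

definition W where
  "W A r t u B x \<longleftrightarrow>
     (\<exists>es. apath B (Inl r) es (Inl t) \<and> labels es = x) \<or>
     (\<exists>p es z. apath A r p u \<and> apath B (Inr u) es z \<and> (z = Inl t \<or> z = Inr t) \<and>
               labels p @ labels es = x)"

definition S where
  "S u B \<longleftrightarrow> (\<forall>e\<in>B. (\<forall>a b. \<not> (src e = Inl a \<and> tgt e = Inr b)) \<and> src e \<noteq> Inl u \<and> tgt e \<noteq> Inl u)"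

lemma init_W:
  assumes "apath A r es t" "labels es = x"
  shows "W A r t u (peel_init A u) x"
  using last_visit[OF assms(1), of u]
proof
  assume h: "r \<noteq> u \<and> (\<forall>e\<in>set es. tgt e \<noteq> u)"
  then have "\<forall>e\<in>set es. src e \<noteq> u" using src_not_u[OF assms(1)] h by blast
  then show ?thesis using inl_path[OF assms(1)] h assms(2) unfolding W_def by blast
next
  assume "\<exists>p q. es = p @ q \<and> apath A r p u \<and> apath A u q t \<and> (\<forall>e\<in>set q. tgt e \<noteq> u)"
  then obtain p q where pq: "es = p @ q" "apath A r p u" "apath A u q t" "\<forall>e\<in>set q. tgt e \<noteq> u"
    by blast
  show ?thesis
  proof (cases q)
    case Nil
    then have "u = t" using pq by (simp add: apath_Nil_iff)
    then show ?thesis unfolding W_def using pq Nil assms(2)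
      by (intro disjI2 exI[of _ p] exI[of _ "[]"] exI[of _ "Inr t"]) (auto intro: apath.intros)
  next
    case (Cons e q')
    obtain a l c b where e: "e = (a,l,c,b)" by (cases e) auto
    have a: "a = u" "b \<noteq> u" "e \<in> A" "apath A b q' t" using pq Cons e by (auto simp: apath_Cons_iff)
    have "\<forall>e\<in>set q'. src e \<noteq> u" using src_not_u[OF a(4)] a pq Cons by auto
    then have ip: "apath (peel_init A u) (Inl b) (map inl_arc q') (Inl t) \<and> labels (map inl_arc q') = labels q'"
      using inl_path[OF a(4)] pq Cons by auto
    have "(Inr u, l, c, Inl b) \<in> peel_init A u" using a e unfolding peel_init_def by auto
    then have "apath (peel_init A u) (Inr u) ((Inr u, l, c, Inl b) # map inl_arc q') (Inl t)"
      using ip by (auto simp: apath_Cons_iff)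
    then show ?thesis unfolding W_def using pq Cons e ip assms(2)
      by (intro disjI2 exI[of _ p] exI[of _ "(Inr u, l, c, Inl b) # map inl_arc q'"] exI[of _ "Inl t"]) auto
  qed
qed

lemma init_S: "S u (peel_init A u)"
  unfolding S_def peel_init_def by auto

lemma filter_W:
  assumes "filter_step solP A r t u C B B'" "x \<in> solP" "W A r t u B x"
  shows "W A r t u B' x"
  using assms(1)
proof cases
  case (1 e)
  show ?thesis using assms(3)[unfolded W_def]
  proof (elim disjE[of "\<exists>es. _ es"] exE conjE)
    fix es assume h: "apath B (Inl r) es (Inl t)" "labels es = x"
    have "e \<notin> set es" using 1 h assms(2) unfolding feasible_through_def by blast
    then have "apath B' (Inl r) es (Inl t)" using apath_set[OF h(1)] 1 by (intro apath_mono[OF h(1)]) auto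
    then show ?thesis using h unfolding W_def by blast
  next
    fix p es z assume h: "apath A r p u" "apath B (Inr u) es z" "z = Inl t \<or> z = Inr t"
      "labels p @ labels es = x"
    have "e \<notin> set es" using 1 h assms(2) unfolding feasible_through_def by blast
    then have "apath B' (Inr u) es z" using apath_set[OF h(2)] 1 by (intro apath_mono[OF h(2)]) auto
    then show ?thesis using h unfolding W_def by blast
  qed
qed

lemma filter_S: "filter_step solP A r t u C B B' \<Longrightarrow> S u B \<Longrightarrow> S u B'"
  by (auto elim: filter_step.cases simp: S_def)

lemma filters:
  assumes "(filter_step solP A r t u C)\<^sup>*\<^sup>* B B'"
  shows "(\<forall>x\<in>solP. W A r t u B x) \<and> S u B \<longrightarrow> (\<forall>x\<in>solP. W A r t u B' x) \<and> S u B'"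
  using assms
  by (induction rule: rtranclp_induct) (auto intro: filter_W filter_S)

lemma crossing_iff: "crossing e \<longleftrightarrow> (\<exists>a b. src e = Inr a \<and> tgt e = Inl b)"
  by (simp add: crossing_def)

lemma iter_W:
  fixes B B1 :: "('n + 'n, 'l) arc set" and X :: "'n set"
  assumes SB: "\<forall>e\<in>B. \<forall>a b. \<not> (src e = Inl a \<and> tgt e = Inr b)"
    and X: "X = {m. \<exists>e\<in>B. crossing e \<and> tgt e = Inl m}"
    and B1: "B1 = {e \<in> B. \<not> crossing e}
        \<union> {(src e, lbl e, val e, Inr m) | e m. e \<in> B \<and> crossing e \<and> tgt e = Inl m}
        \<union> {(Inr m, lbl e, val e, tgt e) | e m. e \<in> B \<and> m \<in> X \<and> src e = Inl m}"
    and W: "W A r t u B x"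
  shows "W A r t u B1 x"
proof -
  have mem1: "e \<in> B1" if "e \<in> B" "\<not> crossing e" for e using that B1 by auto
  have mem2: "(src e, lbl e, val e, Inr m) \<in> B1" if "e \<in> B" "crossing e" "tgt e = Inl m" for e m
    using that B1 by blast
  have mem3: "(Inr m, lbl e, val e, tgt e) \<in> B1" if "e \<in> B" "m \<in> X" "src e = Inl m" for e m
    using that B1 by blast
  have L1: "apath B v es z \<Longrightarrow> (\<exists>a. v = Inl a) \<Longrightarrow> apath B1 v es z \<and> (\<exists>a. z = Inl a)" for v es z
  proof (induction rule: apath.induct)
    case (apath_Nil v)
    then show ?case by (auto intro: apath.intros)
  next
    case (apath_Cons e v es w)
    have "\<exists>a. tgt e = Inl a" using SB apath_Cons by (cases "tgt e") auto
    moreover have "\<not> crossing e" using apath_Cons by (auto simp: crossing_iff)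
    ultimately show ?case using apath_Cons mem1[of e] by (auto simp: apath_Cons_iff)
  qed
  have L3: "apath B v es z \<Longrightarrow> (\<exists>a. v = Inr a) \<Longrightarrow> (z = Inl t \<or> z = Inr t) \<Longrightarrow>
     \<exists>es' z'. apath B1 v es' z' \<and> (z' = Inl t \<or> z' = Inr t) \<and> labels es' = labels es" for v es z
  proof (induction rule: apath.induct)
    case (apath_Nil v)
    then show ?case by (intro exI[of _ "[]"] exI[of _ v]) (auto intro: apath.intros)
  next
    case (apath_Cons e v es w)
    show ?case
    proof (cases "crossing e")
      case True
      then obtain m where m: "tgt e = Inl m" by (auto simp: crossing_iff)
      have mX: "m \<in> X" using X True m apath_Cons by auto
      define e1 :: "('n + 'n, 'l) arc" where "e1 = (src e, lbl e, val e, Inr m)"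
      have e1: "e1 \<in> B1" unfolding e1_def using mem2 apath_Cons True m by blast
      show ?thesis
      proof (cases es)
        case Nil
        then have "w = Inl m" using apath_Cons m by (simp add: apath_Nil_iff)
        then have "m = t" using apath_Cons by auto
        then show ?thesis using e1 apath_Cons Nil
          by (intro exI[of _ "[e1]"] exI[of _ "Inr t"]) (auto simp: apath_Cons_iff apath_Nil_iff e1_def)
      next
        case (Cons e2 es2)
        have h: "e2 \<in> B" "src e2 = Inl m" "apath B (tgt e2) es2 w"
          using apath_Cons Cons m by (auto simp: apath_Cons_iff)
        have "\<exists>a. tgt e2 = Inl a" using SB h by (cases "tgt e2") auto
        then have p2: "apath B1 (tgt e2) es2 w" using L1 h by blast
        define e3 :: "('n + 'n, 'l) arc" where "e3 = (Inr m, lbl e2, val e2, tgt e2)"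
        have e3: "e3 \<in> B1" unfolding e3_def using mem3 h mX by blast
        show ?thesis using e1 e3 p2 apath_Cons Cons
          by (intro exI[of _ "e1 # e3 # es2"] exI[of _ w]) (auto simp: apath_Cons_iff e1_def e3_def)
      qed
    next
      case False
      have "\<exists>a. tgt e = Inr a" using False apath_Cons by (cases "tgt e") (auto simp: crossing_iff)
      then obtain es' z' where "apath B1 (tgt e) es' z'" "z' = Inl t \<or> z' = Inr t" "labels es' = labels es"
        using apath_Cons by blast
      then show ?thesis using apath_Cons mem1 False
        by (intro exI[of _ "e # es'"] exI[of _ z']) (auto simp: apath_Cons_iff)
    qed
  qed
  show ?thesis using W[unfolded W_def]
  proof (elim disjE[of "\<exists>es. _ es"] exE conjE)
    fix es assume h: "apath B (Inl r) es (Inl t)" "labels es = x"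
    then show ?thesis using L1[OF h(1)] unfolding W_def by blast
  next
    fix p es z assume h: "apath A r p u" "apath B (Inr u) es z" "z = Inl t \<or> z = Inr t"
      "labels p @ labels es = x"
    then show ?thesis using L3[OF h(2) _ h(3)] unfolding W_def by fastforce
  qed
qed

lemma iter_inv:
  assumes "peel_iter solP A r t u s s'" "(\<forall>x\<in>solP. W A r t u (snd s) x) \<and> S u (snd s)"
  shows "(\<forall>x\<in>solP. W A r t u (snd s') x) \<and> S u (snd s')"
  using assms(1)
proof cases
  case (1 X B B1 C B2 U)
  have SB: "S u B" using assms(2) 1 by simp
  then have SB': "\<forall>e\<in>B. \<forall>a b. \<not> (src e = Inl a \<and> tgt e = Inr b)" by (simp add: S_def)
  have W1: "\<forall>x\<in>solP. W A r t u B1 x"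
    using iter_W[OF SB' 1(3) 1(5)] assms(2) 1 by auto
  have S1: "S u B1" using SB unfolding 1(5) S_def by (auto simp: crossing_iff)
  show ?thesis using filters[OF 1(7)] W1 S1 1 by auto
qed

lemma iters:
  assumes "(peel_iter solP A r t u)\<^sup>*\<^sup>* s s'"
  shows "(\<forall>x\<in>solP. W A r t u (snd s) x) \<and> S u (snd s) \<longrightarrow> (\<forall>x\<in>solP. W A r t u (snd s') x) \<and> S u (snd s')"
  using assms
  by (induction rule: rtranclp_induct) (auto dest: iter_inv)

lemma touch:
  "apath B v es w \<Longrightarrow> e \<in> set es \<Longrightarrow>
   (tgt e \<noteq> w \<longrightarrow> (\<exists>e'\<in>set es. src e' = tgt e)) \<and> (src e \<noteq> v \<longrightarrow> (\<exists>e'\<in>set es. tgt e' = src e))"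
proof (induction rule: apath.induct)
  case (apath_Nil v)
  then show ?case by simp
next
  case (apath_Cons e0 v es w)
  show ?case
  proof (cases "e = e0")
    case True
    have "tgt e \<noteq> w \<longrightarrow> (\<exists>e'\<in>set es. src e' = tgt e)"
    proof (cases es)
      case Nil
      then show ?thesis using apath_Cons True by (simp add: apath_Nil_iff)
    next
      case (Cons e2 es2)
      then show ?thesis using apath_Cons True by (auto simp: apath_Cons_iff)
    qed
    then show ?thesis using True apath_Cons by auto
  next
    case False
    then have "e \<in> set es" using apath_Cons by simp
    then show ?thesis using apath_Cons by auto
  qed
qed

lemma avoid:
  assumes "apath B v es w" "v \<noteq> Inl x" "w \<noteq> Inl x"
    "\<not> (\<exists>e\<in>B. tgt e = Inl x) \<or> \<not> (\<exists>e\<in>B. src e = Inl x)"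
  shows "set es \<subseteq> {e \<in> B. src e \<noteq> Inl x \<and> tgt e \<noteq> Inl x}"
proof
  fix e assume e: "e \<in> set es"
  have eB: "set es \<subseteq> B" using apath_set[OF assms(1)] .
  from touch[OF assms(1) e] have T: "(tgt e \<noteq> w \<longrightarrow> (\<exists>e'\<in>set es. src e' = tgt e)) \<and> (src e \<noteq> v \<longrightarrow> (\<exists>e'\<in>set es. tgt e' = src e))" .
  have "src e \<noteq> Inl x"
  proof
    assume s: "src e = Inl x"
    then obtain e' where "e' \<in> set es" "tgt e' = Inl x" using T assms(2) by metis
    then have "\<exists>e\<in>B. tgt e = Inl x" using eB by blast
    moreover have "\<exists>e\<in>B. src e = Inl x" using s e eB by blast
    ultimately show False using assms(4) by blast
  qed
  moreover have "tgt e \<noteq> Inl x"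
  proof
    assume s: "tgt e = Inl x"
    then obtain e' where "e' \<in> set es" "src e' = Inl x" using T assms(3) by metis
    then have "\<exists>e\<in>B. src e = Inl x" using eB by blast
    moreover have "\<exists>e\<in>B. tgt e = Inl x" using s e eB by blast
    ultimately show False using assms(4) by blast
  qed
  ultimately show "e \<in> {e \<in> B. src e \<noteq> Inl x \<and> tgt e \<noteq> Inl x}" using e eB by auto
qed

lemma prune_inv:
  assumes "prune_step r t s s'" "(\<forall>x\<in>solP. W A r t u (snd s) x)"
  shows "(\<forall>x\<in>solP. W A r t u (snd s') x) \<and> snd s' \<subseteq> snd s \<and> (r \<in> fst s \<longrightarrow> r \<in> fst s')"
  using assms(1)
proof cases
  case (1 v MN B)
  have "W A r t u (snd s') x" if x: "x \<in> solP" for x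
  proof -
    have Wx: "W A r t u B x" using assms(2) x 1 by auto
    show ?thesis using Wx[unfolded W_def]
    proof (elim disjE[of "\<exists>es. _ es"] exE conjE)
      fix es assume h: "apath B (Inl r) es (Inl t)" "labels es = x"
      have "apath (snd s') (Inl r) es (Inl t)"
        using apath_mono[OF h(1) avoid[OF h(1)]] 1 by auto
      then show ?thesis using h unfolding W_def by blast
    next
      fix p es z assume h: "apath A r p u" "apath B (Inr u) es z" "z = Inl t \<or> z = Inr t"
        "labels p @ labels es = x"
      have "apath (snd s') (Inr u) es z"
        using apath_mono[OF h(2) avoid[OF h(2)]] 1 h(3) by auto
      then show ?thesis using h unfolding W_def by blast
    qed
  qed
  then show ?thesis using 1 by auto
qed

lemma prunes:
  assumes "(prune_step r t)\<^sup>*\<^sup>* s s'"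
  shows "(\<forall>x\<in>solP. W A r t u (snd s) x) \<longrightarrow> (\<forall>x\<in>solP. W A r t u (snd s') x) \<and> snd s' \<subseteq> snd s \<and> (r \<in> fst s \<longrightarrow> r \<in> fst s')"
  using assms
proof (induction rule: rtranclp_induct)
  case base
  then show ?case by simp
next
  case (step y z)
  then show ?case using prune_inv[OF step(2), of solP A u] by blast
qed

lemma Inr_to_Inl_crossing: "apath B v es w \<Longrightarrow> (\<exists>a. v = Inr a) \<Longrightarrow> (\<exists>b. w = Inl b) \<Longrightarrow> \<exists>e\<in>set es. crossing e"
proof (induction rule: apath.induct)
  case (apath_Nil v)
  then show ?case by auto
next
  case (apath_Cons e v es w)
  then show ?case by (cases "tgt e") (auto simp: crossing_iff)
qed

theorem mainTheorem1:
  fixes n :: nat and D :: "nat \<Rightarrow> 'l set" and solP :: "'l list set"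
    and N :: "'n set" and A :: "('n, 'l) arc set" and lay :: "'n \<Rightarrow> nat"
    and r t u :: 'n and U MN :: "'n set" and B :: "('n + 'n, 'l) arc set"
  assumes "discrete_problem n D solP"
    and "mdd n D N A lay r t"
    and "solP \<subseteq> SolMDD A r t"
    and "u \<in> N"
    and "exact_node A r u"
    and "peel solP A N r t u U MN B"
  shows "solP \<subseteq> SolMstar r t MN B \<union> SolU A r t u B"
proof
  fix x assume x: "x \<in> solP"
  obtain B1 where P: "(peel_iter solP A r t u)\<^sup>*\<^sup>* ({u}, peel_init A u) (U, B1)"
    "\<forall>e\<in>B1. \<not> crossing e" "(prune_step r t)\<^sup>*\<^sup>* (N - {u}, B1) (MN, B)"
    using assms(6) unfolding peel_def by blast
  have W0: "\<forall>x\<in>solP. W A r t u (peel_init A u) x"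
  proof
    fix y assume "y \<in> solP"
    then have "y \<in> SolMDD A r t" using assms(3) by blast
    then obtain es where "apath A r es t" "labels es = y" unfolding SolMDD_def by blast
    then show "W A r t u (peel_init A u) y" by (rule init_W)
  qed
  have I1: "(\<forall>x\<in>solP. W A r t u B1 x) \<and> S u B1"
    using iters[OF P(1)] W0 init_S[of u A] by simp
  have I2: "(\<forall>x\<in>solP. W A r t u B x) \<and> B \<subseteq> B1 \<and> (r \<in> N - {u} \<longrightarrow> r \<in> MN)"
    using prunes[OF P(3), of solP A u] I1 by auto
  have rN: "r \<in> N" using assms(2) unfolding mdd_def by simp
  have Wx: "W A r t u B x" using I2 x by blast
  show "x \<in> SolMstar r t MN B \<union> SolU A r t u B"
    using Wx[unfolded W_def]
  proof (elim disjE[of "\<exists>es. _ es"] exE conjE)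
    fix es assume h: "apath B (Inl r) es (Inl t)" "labels es = x"
    show ?thesis
    proof (cases "r = u")
      case False
      then have "r \<in> MN" using I2 rN by blast
      then have "x \<in> SolMstar r t MN B" unfolding SolMstar_def using h by blast
      then show ?thesis by blast
    next
      case True
      show ?thesis
      proof (cases es)
        case Nil
        then have "r = t" using h by (simp add: apath_Nil_iff)
        then have "x \<in> SolU A r t u B" unfolding SolU_def using True h Nil
          by (intro CollectI exI[of _ "[]"]) (auto intro: apath.intros)
        then show ?thesis by blast
      next
        case (Cons e es2)
        then have "e \<in> B1" "src e = Inl u" using h I2 True by (auto simp: apath_Cons_iff)
        then show ?thesis using I1 unfolding S_def by blast
      qed
    qed
  next
    fix p es z assume h: "apath A r p u" "apath B (Inr u) es z" "z = Inl t \<or> z = Inr t"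
      "labels p @ labels es = x"
    have "set es \<subseteq> B1" using apath_set[OF h(2)] I2 by blast
    then have nc: "\<forall>e\<in>set es. \<not> crossing e" using P(2) by blast
    have "z = Inr t" using h(3) Inr_to_Inl_crossing[OF h(2)] nc by blast
    then have "x \<in> SolU A r t u B" unfolding SolU_def using h by blast
    then show ?thesis by blast
  qed
qed

end
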